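(* Let $m>0$, $K\neq 0$ and $H\in\mathbb{R}$, and consider the Schwarzschild metric written in the constant-mean-curvature form described in the context, on the exterior region $r>2m$. Let $\sigma_+$ and $\sigma_-$ be any solutions on $(2m,\infty)$ of the wave phase equations $$\Big(1-\tfrac{2m}{r}\Big)\frac{3}{K}\frac{d\sigma_\pm}{dr}=v\,P^{-1/2}+b_\pm ,$$ with $b_+=+1,\ b_-=-1$ if $K<0$ and $b_+=-1,\ b_-=+1$ if $K>0$. Then: (i) $\sigma_+$ and $\sigma_-$ are strictly monotonic functions of $r$ on $(2m,\infty)$; (ii) $\sigma_+(r)$ has a finite limit as $r\to\infty$ (the outgoing phase coordinate is bounded in the outward direction); (iii) $\sigma_-(r)$ has a finite limit as $r\to 2m^+$, and $d\sigma_-/dr$ remains bounded in magnitude and bounded away from zero on $(2m,R]$ for every $R>2m$, if and only if the naked shift reversal condition holds, i.e. if and only if $3H/K>8m^3$ (equivalently: $H$ and $K$ have the same sign and $(3H/K)^{1/3}>2m$; for $K<0$ this reads $H<\tfrac{8}{3}m^3K$). Consequently, the naked shift reversal condition is necessary and sufficient for the existence of bounded wave phase coordinates on the exterior part of a constant-mean-curvature slice.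
   Context: The spherically symmetric constant-mean-curvature (CMC) slicing of the Schwarzschild spacetime of mass $m$ is given, in coordinates $(t,r,\theta,\varphi)$ with $r$ the areal radius, by the metric $$ds^2=-\Big(1-\tfrac{2m}{r}\Big)dt^2+2vP^{-1/2}\,dt\,dr+r^4P^{-1}dr^2+r^2\,d\Omega^2,$$ where $d\Omega^2$ is the unit round two-sphere metric, $v(r)=Kr^3/3-H$, $P(r)=v^2+(1-2m/r)r^4$, $K$ is the (constant) mean curvature of the slices $t=\text{const}$ and $H$ is a real integration constant. On $r>2m$ one has $P>0$. The wave phase equations above express that $U_\pm=t-\frac{3}{K}\sigma_\pm(r)$ are null functions ($g^{\mu\nu}\partial_\mu U_\pm\partial_\nu U_\pm=0$), so outgoing/ingoing waves move at constant speed in $\sigma_+$/$\sigma_-$. The radial shift vector component of this slicing is $N^r=r^{-4}v\sqrt{P}$; it changes sign at $r_0=(3H/K)^{1/3}$ when $HK>0$, and the "naked shift reversal condition" is that this reversal occurs outside the horizon, $r_0>2m$, i.e. $3H/K>8m^3$. *)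

theory Defs
  imports "HOL-Analysis.Analysis"
begin

definition cmc_v :: "real \<Rightarrow> real \<Rightarrow> real \<Rightarrow> real" where
  "cmc_v K H r = K * r ^ 3 / 3 - H"

definition cmc_P :: "real \<Rightarrow> real \<Rightarrow> real \<Rightarrow> real \<Rightarrow> real" where
  "cmc_P m K H r = (cmc_v K H r) ^ 2 + (1 - 2 * m / r) * r ^ 4"

definition b_plus :: "real \<Rightarrow> real" where
  "b_plus K = (if K < 0 then 1 else -1)"

definition b_minus :: "real \<Rightarrow> real" where
  "b_minus K = (if K < 0 then -1 else 1)"

definition wave_phase_solution ::
  "real \<Rightarrow> real \<Rightarrow> real \<Rightarrow> real \<Rightarrow> (real \<Rightarrow> real) \<Rightarrow> bool" where
  "wave_phase_solution m K H b \<sigma> \<longleftrightarrow>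
     (\<forall>r > 2 * m. \<exists>D. (\<sigma> has_real_derivative D) (at r) \<and>
        (1 - 2 * m / r) * (3 / K) * D = cmc_v K H r / sqrt (cmc_P m K H r) + b)"

definition naked_shift_reversal :: "real \<Rightarrow> real \<Rightarrow> real \<Rightarrow> bool" where
  "naked_shift_reversal m K H \<longleftrightarrow> 3 * H / K > 8 * m ^ 3"

end

theory Submission imports Defs begin

lemma key_alg:
  fixes m K H r D b :: real
  assumes m: "m>0" and r: "r > 2*m" and K: "K \<noteq> 0"
  and eq: "(1 - 2*m/r) * (3/K) * D = cmc_v K H r / sqrt (cmc_P m K H r) + b"
  defines "w \<equiv> (if K<0 then -H else H) - \<bar>K\<bar>*r^3/3"
  defines "S \<equiv> sqrt (w^2 + (r^4 - 2*m*r^3))"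
  shows "b = b_minus K \<Longrightarrow> D = \<bar>K\<bar> * r^4 / (3 * S * (S + w))"
    and "b = b_plus K \<Longrightarrow> D = - \<bar>K\<bar> * r^4 / (3 * S * (S - w))"
proof -
  define v where "v = cmc_v K H r"
  define Q where "Q = r^4 - 2*m*r^3"
  have rpos: "r > 0" using m r by linarith
  have Qpos: "Q > 0" proof -
    have "Q = r^3 * (r - 2*m)" unfolding Q_def by (simp add: algebra_simps power_def)
    thus ?thesis using rpos r by simp
  qed
  have wv: "w^2 = v^2" unfolding w_def v_def cmc_v_def by (auto simp: power2_eq_square algebra_simps)
  have P: "cmc_P m K H r = v^2 + Q" unfolding cmc_P_def v_def Q_def using rpos
    by (simp add: field_simps power_def)
  have SP: "S = sqrt (v^2 + Q)" unfolding S_def Q_def using wv by simp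
  have S2: "S^2 = v^2 + Q" unfolding SP using Qpos by (simp add: add_nonneg_pos)
  have Sv: "S > \<bar>v\<bar>" unfolding SP using Qpos
    by (metis less_add_same_cancel1 real_sqrt_abs real_sqrt_less_iff)
  have Spos: "S > 0" using Sv by linarith
  have sqP: "sqrt (cmc_P m K H r) = S" using P SP by simp
  have fac: "(1 - 2*m/r) = Q / r^4" unfolding Q_def using rpos by (simp add: field_simps power_def)
  have eq2: "D * 3 * Q = K * r^4 * (v / S + b)"
    using eq unfolding fac sqP v_def[symmetric] using K rpos
    by (simp add: field_simps)
  have Qf: "Q = (S - v) * (S + v)" using S2 by (simp add: algebra_simps power2_eq_square)
  have Sp: "S + v > 0" "S - v > 0" using Sv by auto
  have bm: "D = - K * r^4 / (3*S*(S+v))" if "b = -1"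
  proof -
    have "D * 3 * Q = K * r^4 * (v - S) / S" using eq2 that Spos by (simp add: field_simps)
    hence "D * 3 * ((S - v) * (S + v)) = K * r^4 * (v - S) / S" using Qf by simp
    hence "(D*3*(S+v)*S) * (S - v) = (-K*r^4) * (S - v)" using Spos by (simp add: field_simps)
    hence "D*3*(S+v)*S = -K*r^4" using Sp(2) by (metis mult_right_cancel order_less_irrefl)
    moreover have "3*S*(S+v) \<noteq> 0" "3*S*(S-v) \<noteq> 0" using Sp Spos by auto
    ultimately show ?thesis by (subst eq_divide_eq) (simp add: algebra_simps)
  qed
  have bp: "D = K * r^4 / (3*S*(S-v))" if "b = 1"
  proof -
    have "D * 3 * Q = K * r^4 * (v + S) / S" using eq2 that Spos by (simp add: field_simps)
    hence "D * 3 * ((S - v) * (S + v)) = K * r^4 * (v + S) / S" using Qf by simp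
    hence "(D*3*(S-v)*S) * (S + v) = (K*r^4) * (S + v)" using Spos by (simp add: field_simps)
    hence "D*3*(S-v)*S = K*r^4" using Sp(1) by (metis mult_right_cancel order_less_irrefl)
    moreover have "3*S*(S+v) \<noteq> 0" "3*S*(S-v) \<noteq> 0" using Sp Spos by auto
    ultimately show ?thesis by (subst eq_divide_eq) (simp add: algebra_simps)
  qed
  have wK: "w = (if K < 0 then v else -v)" unfolding w_def v_def cmc_v_def by auto
  show "b = b_minus K \<Longrightarrow> D = \<bar>K\<bar> * r^4 / (3 * S * (S + w))"
    using bm bp wK by (cases "K < 0") (auto simp: b_minus_def)
  show "b = b_plus K \<Longrightarrow> D = - \<bar>K\<bar> * r^4 / (3 * S * (S - w))"
    using bm bp wK by (cases "K < 0") (auto simp: b_plus_def)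
qed


lemma mono_bdd_at_top:
  fixes g :: "real \<Rightarrow> real"
  assumes mono: "\<And>a b. r0 \<le> a \<Longrightarrow> a \<le> b \<Longrightarrow> g a \<le> g b"
    and bnd: "\<And>a. r0 \<le> a \<Longrightarrow> g a \<le> B"
  shows "\<exists>L. (g \<longlongrightarrow> L) at_top"
proof -
  let ?l = "Sup (g ` {r0..})"
  have bdd: "bdd_above (g ` {r0..})" using bnd by (auto intro!: bdd_aboveI2)
  have ne: "{r0..} \<noteq> {}" by auto
  have "(g \<longlongrightarrow> ?l) at_top"
  proof (rule increasing_tendsto)
    show "eventually (\<lambda>n. g n \<le> ?l) at_top"
      using eventually_ge_at_top[of r0] by eventually_elim (auto intro: cSUP_upper[OF _ bdd])
  next
    fix x assume "x < ?l"
    then obtain y where y: "y \<ge> r0" "x < g y" using less_cSUP_iff[OF ne bdd] by auto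
    show "eventually (\<lambda>n. x < g n) at_top"
      using eventually_ge_at_top[of y] by eventually_elim (use y mono in force)
  qed
  thus ?thesis by blast
qed

lemma mono_bdd_at_right:
  fixes g :: "real \<Rightarrow> real"
  assumes xR: "x < R" and mono: "\<And>a b. x < a \<Longrightarrow> a \<le> b \<Longrightarrow> b \<le> R \<Longrightarrow> g a \<le> g b"
    and bnd: "\<And>a. x < a \<Longrightarrow> a \<le> R \<Longrightarrow> B \<le> g a"
  shows "\<exists>L. (g \<longlongrightarrow> L) (at_right x)"
proof -
  let ?l = "Inf (g ` {x<..R})"
  have bdd: "bdd_below (g ` {x<..R})" using bnd by (auto intro!: bdd_belowI2)
  have ne: "{x<..R} \<noteq> {}" using xR by auto
  have "(g \<longlongrightarrow> ?l) (at_right x)"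
  proof (rule decreasing_tendsto)
    show "eventually (\<lambda>n. ?l \<le> g n) (at_right x)"
      unfolding eventually_at_right_field using xR
      by (auto intro!: exI[of _ R] cINF_lower[OF bdd])
  next
    fix y assume "?l < y"
    then obtain z where z: "z \<in> {x<..R}" "g z < y" using cINF_less_iff[OF ne bdd] by auto
    show "eventually (\<lambda>n. g n < y) (at_right x)"
      unfolding eventually_at_right_field using z
      by (intro exI[of _ z]) (auto intro: le_less_trans[OF mono[of _ z]])
  qed
  thus ?thesis by blast
qed


theorem theorem1:
  fixes m K H :: real and \<sigma>p \<sigma>m :: "real \<Rightarrow> real"
  assumes "m > 0" and "K \<noteq> 0"
    and "wave_phase_solution m K H (b_plus K) \<sigma>p"
    and "wave_phase_solution m K H (b_minus K) \<sigma>m"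
  shows "(strict_mono_on {2 * m<..} \<sigma>p \<or> strict_antimono_on {2 * m<..} \<sigma>p)
       \<and> (strict_mono_on {2 * m<..} \<sigma>m \<or> strict_antimono_on {2 * m<..} \<sigma>m)
       \<and> (\<exists>L. (\<sigma>p \<longlongrightarrow> L) at_top)
       \<and> (((\<exists>L. (\<sigma>m \<longlongrightarrow> L) (at_right (2 * m)))
            \<and> (\<forall>R > 2 * m. \<exists>c C. 0 < c \<and>
                 (\<forall>r \<in> {2 * m<..R}. c \<le> \<bar>deriv \<sigma>m r\<bar> \<and> \<bar>deriv \<sigma>m r\<bar> \<le> C)))
          \<longleftrightarrow> naked_shift_reversal m K H)"
proof -
  note m = assms(1) and K = assms(2)
  define k where "k = \<bar>K\<bar>"
  define hh where "hh = (if K<0 then -H else H)"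
  define w where "w = (\<lambda>r::real. hh - k*r^3/3)"
  define Q where "Q = (\<lambda>r::real. r^4 - 2*m*r^3)"
  define S where "S = (\<lambda>r. sqrt ((w r)^2 + Q r))"
  define Dm where "Dm = (\<lambda>r. k * r^4 / (3 * S r * (S r + w r)))"
  define Dp where "Dp = (\<lambda>r. - k * r^4 / (3 * S r * (S r - w r)))"
  have kpos: "k > 0" using K unfolding k_def by simp
  have Qpos: "Q r > 0" if "r > 2*m" for r
  proof -
    have "Q r = r^3 * (r - 2*m)" unfolding Q_def by (simp add: algebra_simps power_def)
    thus ?thesis using that m by simp
  qed
  have Sw: "S r > \<bar>w r\<bar>" if "r > 2*m" for r
    unfolding S_def using Qpos[OF that]
    by (metis less_add_same_cancel1 real_sqrt_abs real_sqrt_less_iff)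
  have dm: "(\<sigma>m has_real_derivative Dm r) (at r)" if r: "r > 2*m" for r
  proof -
    obtain D where D: "(\<sigma>m has_real_derivative D) (at r)"
      "(1 - 2 * m / r) * (3 / K) * D = cmc_v K H r / sqrt (cmc_P m K H r) + b_minus K"
      using assms(4) r unfolding wave_phase_solution_def by blast
    have "D = Dm r" using key_alg(1)[OF m r K D(2) refl]
      unfolding Dm_def S_def w_def Q_def k_def hh_def .
    thus ?thesis using D by simp
  qed
  have dp: "(\<sigma>p has_real_derivative Dp r) (at r)" if r: "r > 2*m" for r
  proof -
    obtain D where D: "(\<sigma>p has_real_derivative D) (at r)"
      "(1 - 2 * m / r) * (3 / K) * D = cmc_v K H r / sqrt (cmc_P m K H r) + b_plus K"
      using assms(3) r unfolding wave_phase_solution_def by blast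
    have "D = Dp r" using key_alg(2)[OF m r K D(2) refl]
      unfolding Dp_def S_def w_def Q_def k_def hh_def .
    thus ?thesis using D by simp
  qed
  have rpos: "r > 0" if "r > 2*m" for r using that m by linarith
  have Dm_pos: "Dm r > 0" if "r > 2*m" for r
    using Sw[OF that] rpos[OF that] kpos unfolding Dm_def by (auto intro!: divide_pos_pos mult_pos_pos)
  have Dp_neg: "Dp r < 0" if "r > 2*m" for r
  proof -
    have "k * r^4 / (3 * S r * (S r - w r)) > 0"
      using Sw[OF that] rpos[OF that] kpos by (auto intro!: divide_pos_pos mult_pos_pos)
    thus ?thesis unfolding Dp_def by simp
  qed
  have smm: "strict_mono_on {2 * m<..} \<sigma>m"
    unfolding monotone_on_def
  proof (intro ballI impI)
    fix a b assume ab: "a \<in> {2*m<..}" "b \<in> {2*m<..}" "a < b"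
    show "\<sigma>m a < \<sigma>m b"
    proof (rule DERIV_pos_imp_increasing[OF ab(3)])
      fix x assume "a \<le> x" "x \<le> b"
      hence x: "x > 2*m" using ab by auto
      show "\<exists>y. (\<sigma>m has_real_derivative y) (at x) \<and> 0 < y"
        using dm[OF x] Dm_pos[OF x] by blast
    qed
  qed
  have spa: "strict_antimono_on {2 * m<..} \<sigma>p"
    unfolding monotone_on_def
  proof (intro ballI impI)
    fix a b assume ab: "a \<in> {2*m<..}" "b \<in> {2*m<..}" "a < b"
    have "(\<lambda>x. - \<sigma>p x) a < (\<lambda>x. - \<sigma>p x) b"
    proof (rule DERIV_pos_imp_increasing[OF ab(3)])
      fix x assume "a \<le> x" "x \<le> b"
      hence x: "x > 2*m" using ab by auto
      show "\<exists>y. ((\<lambda>x. - \<sigma>p x) has_real_derivative y) (at x) \<and> 0 < y"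
        using DERIV_minus[OF dp[OF x]] Dp_neg[OF x] by auto
    qed
    thus "\<sigma>p b < \<sigma>p a" by simp
  qed
  have lim_p: "\<exists>L. (\<sigma>p \<longlongrightarrow> L) at_top"
  proof -
    define C where "C = 6 / k"
    define r0 where "r0 = 2*m + 1 + 6*\<bar>hh\<bar>/k"
    have "6*\<bar>hh\<bar>/k \<ge> 0" using kpos by simp
    hence r0m: "r0 > 2*m" and r01: "r0 \<ge> 1" using kpos m unfolding r0_def by linarith+
    have bndp: "- C / r^2 \<le> Dp r" if r: "r \<ge> r0" for r
    proof -
      have r2m: "r > 2*m" and r1: "r \<ge> 1" using r r0m r01 by auto
      have "r^1 \<le> r^3" using r1 by (intro power_increasing) simp_all
      hence r3: "r \<le> r^3" by simp
      have "k * r \<ge> k * (6*\<bar>hh\<bar>/k)" using r kpos m unfolding r0_def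
        by (intro mult_left_mono) auto
      hence "k * r \<ge> 6*\<bar>hh\<bar>" using kpos by simp
      moreover have "k * r \<le> k * r^3" using r3 kpos by simp
      ultimately have hk: "6*\<bar>hh\<bar> \<le> k * r^3" by linarith
      define a where "a = - w r"
      have a: "a \<ge> k * r^3 / 6" unfolding a_def w_def using hk by (auto simp: abs_if split: if_splits)
      have apos: "a > 0" using a kpos r1 by (smt (verit) divide_pos_pos mult_pos_pos zero_less_power)
      have Sa: "S r \<ge> a" using Sw[OF r2m] unfolding a_def by simp
      have "S r - w r \<ge> 2 * a" using Sa unfolding a_def by simp
      hence "S r * (S r - w r) \<ge> a * (2 * a)" using Sa apos by (intro mult_mono) auto
      moreover have "a * (2*a) \<ge> (k * r^3 / 6) * (2 * (k * r^3 / 6))"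
        using a apos kpos r1 by (intro mult_mono) auto
      ultimately have den: "3 * (S r * (S r - w r)) \<ge> k^2 * r^6 / 6"
        by (simp add: power2_eq_square power_def algebra_simps)
      have dpos: "k^2 * r^6 / 6 > 0" using kpos r1 by simp
      have "k * r^4 / (3 * S r * (S r - w r)) \<le> k * r^4 / (k^2 * r^6 / 6)"
      proof (rule divide_left_mono)
        show "k^2 * r^6 / 6 \<le> 3 * S r * (S r - w r)" using den by (simp add: mult.assoc)
        show "0 \<le> k * r^4" using kpos r1 by simp
        have "S r > 0" "S r - w r > 0" using Sw[OF r2m] by auto
        thus "0 < 3 * S r * (S r - w r) * (k^2 * r^6 / 6)" using dpos by simp
      qed
      also have "\<dots> = C / r^2" unfolding C_def using kpos r1
        by (simp add: field_simps power2_eq_square power_def)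
      finally show ?thesis unfolding Dp_def by simp
    qed
    have low: "\<sigma>p r \<ge> \<sigma>p r0 - C / r0" if r: "r \<ge> r0" for r
    proof -
      have "(\<lambda>x. \<sigma>p x - C / x) r0 \<le> (\<lambda>x. \<sigma>p x - C / x) r"
      proof (rule DERIV_nonneg_imp_nondecreasing[OF r])
        fix x assume "r0 \<le> x" "x \<le> r"
        hence x: "x > 2*m" "x \<ge> r0" "x > 0" using r0m r01 by auto
        have "((\<lambda>x. C / x) has_real_derivative (- C / x^2)) (at x)"
          using x by (auto intro!: derivative_eq_intros simp: power2_eq_square field_simps)
        from DERIV_diff[OF dp[OF x(1)] this]
        show "\<exists>y. ((\<lambda>x. \<sigma>p x - C / x) has_real_derivative y) (at x) \<and> 0 \<le> y"
          using bndp[OF x(2)] by (intro exI[of _ "Dp x - - C / x^2"]) auto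
      qed
      moreover have "C / r \<ge> 0" using kpos r r01 unfolding C_def by auto
      ultimately show ?thesis by simp
    qed
    have "\<exists>L. ((\<lambda>x. - \<sigma>p x) \<longlongrightarrow> L) at_top"
    proof (rule mono_bdd_at_top[of r0 _ "- (\<sigma>p r0 - C / r0)"])
      fix a b assume "r0 \<le> a" "a \<le> b"
      hence "a \<in> {2*m<..}" "b \<in> {2*m<..}" using r0m by auto
      show "- \<sigma>p a \<le> - \<sigma>p b"
      proof (cases "a = b")
        case False
        hence "a < b" using \<open>a \<le> b\<close> by simp
        hence "\<sigma>p b < \<sigma>p a" using spa \<open>a \<in> _\<close> \<open>b \<in> _\<close> unfolding monotone_on_def by blast
        thus ?thesis by simp
      qed simp
    next
      fix a assume "r0 \<le> a" thus "- \<sigma>p a \<le> - (\<sigma>p r0 - C / r0)" using low[of a] by simp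
    qed
    then obtain L where "((\<lambda>x. - \<sigma>p x) \<longlongrightarrow> L) at_top" by blast
    from tendsto_minus[OF this] show ?thesis by auto
  qed
  have naked_iff: "naked_shift_reversal m K H \<longleftrightarrow> w (2*m) > 0"
  proof (cases "K < 0")
    case True
    have "3 * H / K > 8 * m^3 \<longleftrightarrow> 3 * H < 8 * m^3 * K" using True by (simp add: neg_less_divide_eq)
    thus ?thesis unfolding naked_shift_reversal_def w_def hh_def k_def using True
      by (simp add: power_def algebra_simps)
  next
    case False
    hence Kp: "K > 0" using K by simp
    have "3 * H / K > 8 * m^3 \<longleftrightarrow> 3 * H > 8 * m^3 * K" using Kp by (simp add: less_divide_eq)
    thus ?thesis unfolding naked_shift_reversal_def w_def hh_def k_def using Kp
      by (simp add: power_def algebra_simps)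
  qed
  have deq: "deriv \<sigma>m r = Dm r" if "r > 2*m" for r using DERIV_imp_deriv[OF dm[OF that]] .
  have Swsq: "(S r)^2 = (w r)^2 + Q r" if "r > 2*m" for r
    unfolding S_def using Qpos[OF that] by (simp add: add_nonneg_pos)
  have iii: "((\<exists>L. (\<sigma>m \<longlongrightarrow> L) (at_right (2 * m)))
            \<and> (\<forall>R > 2 * m. \<exists>c C. 0 < c \<and>
                 (\<forall>r \<in> {2 * m<..R}. c \<le> \<bar>deriv \<sigma>m r\<bar> \<and> \<bar>deriv \<sigma>m r\<bar> \<le> C)))
          \<longleftrightarrow> w (2*m) > 0"
  proof
    assume L: "(\<exists>L. (\<sigma>m \<longlongrightarrow> L) (at_right (2 * m)))
            \<and> (\<forall>R > 2 * m. \<exists>c C. 0 < c \<and>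
                 (\<forall>r \<in> {2 * m<..R}. c \<le> \<bar>deriv \<sigma>m r\<bar> \<and> \<bar>deriv \<sigma>m r\<bar> \<le> C))"
    show "w (2*m) > 0"
    proof (rule ccontr)
      assume nw: "\<not> w (2*m) > 0"
      obtain c C where cC: "\<forall>r \<in> {2 * m<..2*m+1}. c \<le> \<bar>deriv \<sigma>m r\<bar> \<and> \<bar>deriv \<sigma>m r\<bar> \<le> C"
        using L by (meson less_add_one)
      define C' where "C' = max C 1"
      define \<delta> where "\<delta> = min 1 (2*k*m / (3*(C'+1)))"
      have C'1: "C' \<ge> 1" "C' \<ge> C" unfolding C'_def by auto
      have dpos: "\<delta> > 0" unfolding \<delta>_def using kpos m C'1 by auto
      define r where "r = 2*m + \<delta>"
      have "\<delta> \<le> 1" unfolding \<delta>_def by simp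
      hence r: "r > 2*m" "r \<le> 2*m+1" unfolding r_def using dpos by auto
      have "r^3 > (2*m)^3" using r m by (intro power_strict_mono) auto
      hence "k * (2*m)^3 < k * r^3" using kpos by simp
      hence wneg: "w r < 0" using nw unfolding w_def by simp
      have Sr: "S r > \<bar>w r\<bar>" using Sw[OF r(1)] .
      have spw: "S r + w r > 0" "S r - w r \<ge> S r" "S r > 0" using Sr wneg by auto
      have "(S r + w r) * (S r - w r) = Q r" using Swsq[OF r(1)] by (simp add: algebra_simps power2_eq_square)
      moreover have "S r * (S r + w r) \<le> (S r - w r) * (S r + w r)"
        using spw by (intro mult_right_mono) auto
      ultimately have FQ: "S r * (S r + w r) \<le> Q r" by (simp add: mult.commute)
      have Qr: "Q r = r^3 * \<delta>" unfolding Q_def r_def by (simp add: algebra_simps power_def)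
      have "Dm r = k * r^4 / (3 * (S r * (S r + w r)))" unfolding Dm_def by (simp add: mult.assoc)
      also have "\<dots> \<ge> k * r^4 / (3 * Q r)"
        using FQ spw kpos r rpos[OF r(1)] Qpos[OF r(1)] by (intro divide_left_mono) auto
      also have "k * r^4 / (3 * Q r) = k * r / (3 * \<delta>)" unfolding Qr using rpos[OF r(1)] dpos
        by (simp add: field_simps power_def)
      finally have D1: "Dm r \<ge> k * r / (3 * \<delta>)" .
      have "k * (2*m) / (3*\<delta>) \<le> k * r / (3*\<delta>)" using r kpos dpos
        by (intro divide_right_mono) auto
      moreover have "k * (2*m) / (3*\<delta>) \<ge> C' + 1"
      proof -
        have "\<delta> \<le> 2*k*m / (3*(C'+1))" unfolding \<delta>_def by simp
        hence "\<delta> * (3*(C'+1)) \<le> 2*k*m" using C'1 by (simp add: le_divide_eq)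
        thus ?thesis using dpos by (simp add: le_divide_eq algebra_simps)
      qed
      ultimately have "Dm r \<ge> C' + 1" using D1 by linarith
      moreover have "\<bar>deriv \<sigma>m r\<bar> \<le> C" using cC r by auto
      ultimately show False using deq[OF r(1)] C'1 spw by simp
    qed
  next
    assume wp: "w (2*m) > 0"
    have bnds: "\<exists>c C. 0 < c \<and> 0 < C \<and> (\<forall>r\<in>{2*m<..R}. c \<le> Dm r \<and> Dm r \<le> C)" if R: "R > 2*m" for R
    proof -
      define F where "F = (\<lambda>r. S r * (S r + w r))"
      have cont: "continuous_on {2*m..R} F" unfolding F_def S_def w_def Q_def
        by (intro continuous_intros) auto
      have Fpos: "F r > 0" if "r \<in> {2*m..R}" for r
      proof (cases "r = 2*m")
        case True
        have "Q r = 0" unfolding True Q_def by (simp add: power_def)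
        hence "S r = w r" unfolding S_def using wp True by simp
        thus ?thesis unfolding F_def using wp True by simp
      next
        case False
        hence "r > 2*m" using that by auto
        from Sw[OF this] show ?thesis unfolding F_def by (auto intro!: mult_pos_pos)
      qed
      have ne: "{2*m..R} \<noteq> {}" using R by auto
      obtain r1 where r1: "r1 \<in> {2*m..R}" "\<And>y. y \<in> {2*m..R} \<Longrightarrow> F r1 \<le> F y"
        using continuous_attains_inf[OF compact_Icc ne cont] by blast
      obtain r2 where r2: "r2 \<in> {2*m..R}" "\<And>y. y \<in> {2*m..R} \<Longrightarrow> F y \<le> F r2"
        using continuous_attains_sup[OF compact_Icc ne cont] by blast
      have F1: "F r1 > 0" and F2: "F r2 > 0" using Fpos r1(1) r2(1) by auto
      show ?thesis
      proof (intro exI conjI ballI)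
        show "0 < k * (2*m)^4 / (3 * F r2)" using kpos m F2 by simp
        show "0 < k * R^4 / (3 * F r1)" using kpos R m F1 by simp
        fix r assume r: "r \<in> {2*m<..R}"
        hence rr: "r \<in> {2*m..R}" "r > 2*m" "r \<le> R" by auto
        have Dr: "Dm r = k * r^4 / (3 * F r)" unfolding Dm_def F_def by (simp add: mult.assoc)
        have Fr: "F r > 0" using Fpos[OF rr(1)] .
        have "(2*m)^4 \<le> r^4" using rr m by (intro power_mono) auto
        thus "k * (2*m)^4 / (3 * F r2) \<le> Dm r" unfolding Dr using kpos Fr r2(2)[OF rr(1)]
          by (intro frac_le) auto
        have "r^4 \<le> R^4" using rr m by (intro power_mono) auto
        thus "Dm r \<le> k * R^4 / (3 * F r1)" unfolding Dr using kpos F1 r1(2)[OF rr(1)]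
          by (intro frac_le) auto
      qed
    qed
    have part2: "\<forall>R > 2 * m. \<exists>c C. 0 < c \<and>
                 (\<forall>r \<in> {2 * m<..R}. c \<le> \<bar>deriv \<sigma>m r\<bar> \<and> \<bar>deriv \<sigma>m r\<bar> \<le> C)"
    proof (intro allI impI)
      fix R assume "R > 2*m"
      from bnds[OF this] obtain c C where cC: "0 < c" "\<forall>r\<in>{2*m<..R}. c \<le> Dm r \<and> Dm r \<le> C" by blast
      show "\<exists>c C. 0 < c \<and> (\<forall>r \<in> {2 * m<..R}. c \<le> \<bar>deriv \<sigma>m r\<bar> \<and> \<bar>deriv \<sigma>m r\<bar> \<le> C)"
        using cC deq Dm_pos by (intro exI[of _ c] exI[of _ C]) auto
    qed
    define R where "R = 2*m + 1"
    have R: "R > 2*m" unfolding R_def by simp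
    from bnds[OF R] obtain c C where cC: "0 < C" "\<forall>r\<in>{2*m<..R}. c \<le> Dm r \<and> Dm r \<le> C" by blast
    have low: "\<sigma>m r \<ge> \<sigma>m R - C * R + C * (2*m)" if r: "2*m < r" "r \<le> R" for r
    proof -
      have "(\<lambda>x. \<sigma>m x - C * x) r \<ge> (\<lambda>x. \<sigma>m x - C * x) R"
      proof (rule DERIV_nonpos_imp_nonincreasing[OF r(2)])
        fix x assume "r \<le> x" "x \<le> R"
        hence x: "x > 2*m" "x \<in> {2*m<..R}" using r by auto
        have "((\<lambda>x. C * x) has_real_derivative C) (at x)"
          by (auto intro!: derivative_eq_intros)
        from DERIV_diff[OF dm[OF x(1)] this]
        show "\<exists>y. ((\<lambda>x. \<sigma>m x - C * x) has_real_derivative y) (at x) \<and> y \<le> 0"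
          using cC(2) x(2) by (intro exI[of _ "Dm x - C"]) auto
      qed
      moreover have "C * r \<ge> C * (2*m)" using r cC(1) by simp
      ultimately show ?thesis by simp
    qed
    have "\<exists>L. (\<sigma>m \<longlongrightarrow> L) (at_right (2 * m))"
    proof (rule mono_bdd_at_right[OF R])
      fix a b assume ab: "2*m < a" "a \<le> b" "b \<le> R"
      show "\<sigma>m a \<le> \<sigma>m b"
      proof (cases "a = b")
        case False
        hence "a < b" using ab by simp
        hence "\<sigma>m a < \<sigma>m b" using smm ab unfolding monotone_on_def by auto
        thus ?thesis by simp
      qed simp
    next
      fix a assume "2*m < a" "a \<le> R"
      thus "\<sigma>m R - C * R + C * (2*m) \<le> \<sigma>m a" using low by blast
    qed
    with part2 show "(\<exists>L. (\<sigma>m \<longlongrightarrow> L) (at_right (2 * m))) \<and> (\<forall>R > 2 * m. \<exists>c C. 0 < c \<and>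
                 (\<forall>r \<in> {2 * m<..R}. c \<le> \<bar>deriv \<sigma>m r\<bar> \<and> \<bar>deriv \<sigma>m r\<bar> \<le> C))" by blast
  qed
  show ?thesis using spa smm lim_p iii naked_iff by blast
qed

end
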